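(* Let $k\ge1$ and $g_k(z):=-\log f_k(e^{-z})$ for $z>0$. Then: (a) $g_k(z)\sim e^{-kz}$ as $z\to\infty$; (b) $g_k(z)\sim\frac1k\log z^{-1}$ as $z\to0^+$; (c) $g_k$ is differentiable on $(0,\infty)$ and $g_k'(z)\sim-\frac{1}{kz}$ as $z\to0^+$.
   Context: For an integer $k\ge1$, $f_k:[0,1]\to[0,1]$ denotes the unique decreasing function satisfying $f_k(x)^k-f_k(x)^{k+1}=x^k-x^{k+1}$ for all $x\in[0,1]$; it is continuous with $f_k(0)=1$, $f_k(1)=0$. The notation $F\sim G$ means $F/G\to1$. *)

theory Defs
  imports "HOL-Analysis.Analysis"
begin

text \<open>f k is the unique decreasing function [0,1] -> [0,1] with
  f(x)^k - f(x)^(k+1) = x^k - x^(k+1); outside [0,1] it is fixed to 0 so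
  that the description is unique.\<close>
definition f_fun :: "nat \<Rightarrow> real \<Rightarrow> real" where
  "f_fun k = (THE f. (\<forall>x\<in>{0..1}. f x \<in> {0..1} \<and>
                         f x ^ k - f x ^ (k+1) = x ^ k - x ^ (k+1)) \<and>
                      antimono_on {0..1} f \<and>
                      (\<forall>x. x \<notin> {0..1} \<longrightarrow> f x = 0))"

definition g_fun :: "nat \<Rightarrow> real \<Rightarrow> real" where
  "g_fun k z = - ln (f_fun k (exp (- z)))"

end

theory Submission imports Defs "HOL-Real_Asymp.Real_Asymp"
begin

definition Af :: "nat \<Rightarrow> real \<Rightarrow> real" where "Af k t = (\<Sum>i<k. t^i)"
definition Ad :: "nat \<Rightarrow> real \<Rightarrow> real" where "Ad k t = (\<Sum>i<k. real i * t^(i-1))"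
definition Zf :: "nat \<Rightarrow> real \<Rightarrow> real" where "Zf k t = ln (Af k t + t^k) - ln (Af k t)"
definition Zd :: "nat \<Rightarrow> real \<Rightarrow> real" where
  "Zd k t = (Ad k t + real k * t^(k-1)) / (Af k t + t^k) - Ad k t / Af k t"

lemma A_id: "Af k t + t^k = 1 + t * Af k t"
proof (induction k)
  case 0 then show ?case by (simp add: Af_def)
next
  case (Suc k)
  have e1: "Af (Suc k) t = Af k t + t^k" by (simp add: Af_def)
  have e2: "t * (Af k t + t^k) = t * Af k t + t^(Suc k)" by (simp add: algebra_simps)
  show ?case unfolding e1 using Suc.IH e2 by linarith
qed

lemma A_ge1: "k \<ge> 1 \<Longrightarrow> t \<ge> 0 \<Longrightarrow> Af k t \<ge> 1"
proof (induction k rule: dec_induct)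
  case base then show ?case by (simp add: Af_def)
next
  case (step n) then show ?case by (simp add: Af_def) (meson add_increasing2 zero_le_power)
qed

lemma A_mono: "0 \<le> s \<Longrightarrow> s \<le> t \<Longrightarrow> Af k s \<le> Af k t"
  unfolding Af_def by (intro sum_mono power_mono) auto

lemma A_deriv: "(Af k has_field_derivative Ad k t) (at t)"
  unfolding Af_def Ad_def
  by (auto intro!: derivative_eq_intros)

lemma A_cont: "isCont (Af k) t"
  unfolding Af_def by (intro continuous_intros)

lemma Ad_cont: "isCont (Ad k) t"
  unfolding Ad_def by (intro continuous_intros)

lemma W_strict_mono:
  assumes k: "k \<ge> 1" and st: "0 < s" "s < t"
  shows "s^k / Af k s < t^k / Af k t"
proof -
  have As: "Af k s > 0" and At: "Af k t > 0" using A_ge1[OF k] st by (auto intro: less_le_trans[of 0 1])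
  have "(\<Sum>i<k. s^k * t^i) < (\<Sum>i<k. t^k * s^i)"
  proof (rule sum_strict_mono)
    show "{..<k} \<noteq> {}" using k by (auto simp: lessThan_empty_iff)
    fix i assume i: "i \<in> {..<k}"
    have e1: "s^k * t^i = s^(k-i) * (s^i * t^i)" using i by (simp add: power_add[symmetric])
    have e2: "t^k * s^i = t^(k-i) * (s^i * t^i)" using i by (simp add: power_add[symmetric])
    have "s^(k-i) < t^(k-i)" using i st by (intro power_strict_mono) auto
    moreover have "s^i * t^i > 0" using st by auto
    ultimately show "s^k * t^i < t^k * s^i" unfolding e1 e2 by (rule mult_strict_right_mono)
  qed auto
  hence "s^k * Af k t < t^k * Af k s" unfolding Af_def by (simp add: sum_distrib_left)
  thus ?thesis using As At by (simp add: divide_simps mult.commute)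
qed


lemma A_pos: "k \<ge> 1 \<Longrightarrow> t \<ge> 0 \<Longrightarrow> Af k t > 0"
  using A_ge1[of k t] by linarith

lemma Z_alt1: assumes "k \<ge> 1" "t \<ge> 0" shows "Zf k t = ln (1 + t^k / Af k t)"
proof -
  have A: "Af k t > 0" using A_pos assms by auto
  have "Af k t + t^k > 0" using A assms by (simp add: add_pos_nonneg)
  hence "Zf k t = ln ((Af k t + t^k) / Af k t)" unfolding Zf_def using A by (simp add: ln_div)
  also have "(Af k t + t^k) / Af k t = 1 + t^k / Af k t" using A by (simp add: field_simps)
  finally show ?thesis .
qed

lemma Z_alt2: assumes "k \<ge> 1" "t \<ge> 0" shows "Zf k t = ln (t + 1 / Af k t)"
proof -
  have A: "Af k t > 0" using A_pos assms by auto
  have "1 + t^k / Af k t = (Af k t + t^k) / Af k t" using A by (simp add: field_simps)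
  also have "\<dots> = t + 1 / Af k t" unfolding A_id using A by (simp add: field_simps)
  finally show ?thesis using Z_alt1[OF assms] by simp
qed

lemma Z_strict_mono: assumes k: "k \<ge> 1" and st: "0 < s" "s < t" shows "Zf k s < Zf k t"
proof -
  have "s^k / Af k s \<ge> 0" using A_pos[OF k, of s] st by auto
  thus ?thesis using Z_alt1[OF k, of s] Z_alt1[OF k, of t] st W_strict_mono[OF k st] by simp
qed

lemma Z_mono_iff: assumes k: "k \<ge> 1" and st: "0 < s" "0 < t" shows "Zf k s < Zf k t \<longleftrightarrow> s < t"
  using Z_strict_mono[OF k, of s t] Z_strict_mono[OF k, of t s] st by (cases s t rule: linorder_cases) auto

lemma Z_inj: assumes k: "k \<ge> 1" and st: "0 < s" "0 < t" "Zf k s = Zf k t" shows "s = t"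
  using Z_mono_iff[OF k, of s t] Z_mono_iff[OF k, of t s] st by (cases s t rule: linorder_cases) auto

lemma Z_pos: assumes k: "k \<ge> 1" and t: "t > 0" shows "Zf k t > 0"
proof -
  have "t^k / Af k t > 0" using A_pos[OF k, of t] t by auto
  thus ?thesis using Z_alt1[OF k, of t] t by simp
qed

lemma Z_deriv: assumes k: "k \<ge> 1" and t: "t \<ge> 0" shows "(Zf k has_field_derivative Zd k t) (at t)"
proof -
  have A: "Af k t > 0" using A_pos assms by auto
  have B: "Af k t + t^k > 0" using A t by (simp add: add_pos_nonneg)
  have "((\<lambda>t. ln (Af k t + t^k) - ln (Af k t)) has_field_derivative
     ((Ad k t + real k * t^(k-1)) / (Af k t + t^k) - Ad k t / Af k t)) (at t)"
    using A B by (auto intro!: derivative_eq_intros A_deriv simp: field_simps)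
  thus ?thesis unfolding Zf_def Zd_def by (simp add: fun_eq_iff)
qed

lemma Z_cont: "k \<ge> 1 \<Longrightarrow> t \<ge> 0 \<Longrightarrow> isCont (Zf k) t"
  using Z_deriv DERIV_isCont by blast

lemma tAd: "t * Ad k t = (\<Sum>i<k. real i * t^i)"
  unfolding Ad_def sum_distrib_left
  by (rule sum.cong) (auto simp: power_eq_if)

lemma kA_pos: assumes k: "k \<ge> 1" and t: "t > 0" shows "real k * Af k t - t * Ad k t > 0"
proof -
  have "real k * Af k t - t * Ad k t = (\<Sum>i<k. (real k - real i) * t^i)"
    unfolding tAd Af_def sum_distrib_left sum_subtractf[symmetric] by (simp add: algebra_simps)
  also have "\<dots> > 0"
    using k t by (intro sum_pos) (auto simp: lessThan_empty_iff)
  finally show ?thesis .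
qed

lemma tZd: assumes k: "k \<ge> 1" and t: "t > 0"
  shows "t * Zd k t = t^k * (real k * Af k t - t * Ad k t) / (Af k t * (Af k t + t^k))"
proof -
  have A: "Af k t > 0" using A_pos assms by auto
  have B: "Af k t + t^k > 0" using A t by (simp add: add_pos_nonneg)
  have tk: "t * t^(k-1) = t^k" using k by (cases k) auto
  show ?thesis unfolding Zd_def using A B
    by (simp add: field_simps tk[symmetric])
qed

lemma Zd_pos: assumes k: "k \<ge> 1" and t: "t > 0" shows "Zd k t > 0"
proof -
  have A: "Af k t > 0" using A_pos assms by auto
  have B: "Af k t + t^k > 0" using A t by (simp add: add_pos_nonneg)
  have "t * Zd k t > 0" unfolding tZd[OF k t] using A B kA_pos[OF k t] t by simp
  thus ?thesis using t by (simp add: zero_less_mult_iff)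
qed


lemma Z_0: "k \<ge> 1 \<Longrightarrow> Zf k 0 = 0"
  by (simp add: Zf_def Af_def power_0_left)

lemma Z_lim0: assumes k: "k \<ge> 1" shows "(Zf k \<longlongrightarrow> 0) (at_right 0)"
proof -
  have "(Zf k \<longlongrightarrow> Zf k 0) (at 0)" using Z_cont[OF k, of 0] by (simp add: isCont_def)
  thus ?thesis using Z_0[OF k] by (simp add: filterlim_at_split)
qed

lemma Z_lim_top: assumes k: "k \<ge> 1" shows "filterlim (Zf k) at_top at_top"
proof (rule filterlim_at_top_mono[OF ln_at_top])
  show "\<forall>\<^sub>F t in at_top. ln t \<le> Zf k t"
    using eventually_gt_at_top[of 0]
  proof eventually_elim
    case (elim t)
    have p: "1 / Af k t > 0" using A_pos[OF k, of t] elim by simp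
    have q: "t + 1 / Af k t > 0" using p elim by linarith
    have "ln t \<le> ln (t + 1 / Af k t)" by (simp only: ln_le_cancel_iff[OF elim q]) (use p in linarith)
    thus ?case using Z_alt2[OF k, of t] elim by simp
  qed
qed

definition Tf :: "nat \<Rightarrow> real \<Rightarrow> real" where "Tf k z = (THE t. t > 0 \<and> Zf k t = z)"

lemma T_ex: assumes k: "k \<ge> 1" and z: "z > 0" shows "\<exists>t>0. Zf k t = z"
proof -
  have "eventually (\<lambda>t. Zf k t < z) (at_right 0)"
    using Z_lim0[OF k] z by (rule order_tendstoD)
  then obtain b where b: "b > 0" "\<And>y. 0 < y \<Longrightarrow> y < b \<Longrightarrow> Zf k y < z"
    unfolding eventually_at_right_field by auto
  define a where "a = b/2"
  have a: "a > 0" "Zf k a < z" using b by (auto simp: a_def)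
  have "eventually (\<lambda>t. Zf k t > z) at_top"
    using Z_lim_top[OF k] by (simp add: filterlim_at_top_dense)
  then obtain N where N: "\<And>t. t \<ge> N \<Longrightarrow> Zf k t > z" unfolding eventually_at_top_linorder by auto
  define c where "c = max N a + 1"
  have c: "c > a" "Zf k c > z" using N by (auto simp: c_def)
  have "continuous_on {a..c} (Zf k)"
    using a by (intro continuous_at_imp_continuous_on ballI Z_cont[OF k]) auto
  then obtain t where "a \<le> t" "t \<le> c" "Zf k t = z"
    using IVT'[of "Zf k" a z c] a c by auto
  hence "t > 0" "Zf k t = z" using a by auto
  thus ?thesis by blast
qed

lemma T_prop: assumes k: "k \<ge> 1" and z: "z > 0" shows "Tf k z > 0 \<and> Zf k (Tf k z) = z"
proof -
  have "\<exists>!t. t > 0 \<and> Zf k t = z" using T_ex[OF k z] Z_inj[OF k] by blast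
  thus ?thesis unfolding Tf_def by (rule theI')
qed

lemma T_Z: assumes k: "k \<ge> 1" and t: "t > 0" shows "Tf k (Zf k t) = t"
proof -
  have "Zf k t > 0" using Z_pos[OF k t] .
  from T_prop[OF k this] show ?thesis using Z_inj[OF k] t by blast
qed

lemma T_less_iff: assumes k: "k \<ge> 1" and z: "z > 0" "w > 0" shows "Tf k z < Tf k w \<longleftrightarrow> z < w"
  using Z_mono_iff[OF k, of "Tf k z" "Tf k w"] T_prop[OF k z(1)] T_prop[OF k z(2)] by simp

lemma T_lim_top: assumes k: "k \<ge> 1" shows "filterlim (Tf k) at_top at_top"
  unfolding filterlim_at_top_dense
proof (intro allI)
  fix M :: real
  define M' where "M' = max M 1"
  have "eventually (\<lambda>z. z > Zf k M') at_top" by (rule eventually_gt_at_top)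
  thus "eventually (\<lambda>z. Tf k z > M) at_top"
  proof eventually_elim
    case (elim z)
    have M': "M' > 0" "M \<le> M'" by (auto simp: M'_def)
    have zp: "z > 0" using Z_pos[OF k M'(1)] elim by linarith
    have "Tf k (Zf k M') < Tf k z" using T_less_iff[OF k Z_pos[OF k M'(1)] zp] elim by simp
    thus ?case using T_Z[OF k M'(1)] M' by simp
  qed
qed

lemma T_lim0: assumes k: "k \<ge> 1" shows "filterlim (Tf k) (at_right 0) (at_right 0)"
proof (rule tendsto_imp_filterlim_at_right)
  show "\<forall>\<^sub>F z in at_right 0. Tf k z > 0"
    by (rule eventually_at_rightI[of 0 1]) (use T_prop[OF k] in auto)
  show "(Tf k \<longlongrightarrow> 0) (at_right 0)"
  proof (rule order_tendstoI)
    fix a :: real assume "a < 0"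
    thus "\<forall>\<^sub>F z in at_right 0. a < Tf k z"
      by (intro eventually_at_rightI[of 0 1]) (use T_prop[OF k] in force)+
  next
    fix a :: real assume a: "a > 0"
    have Za: "Zf k a > 0" using Z_pos[OF k a] .
    show "\<forall>\<^sub>F z in at_right 0. Tf k z < a"
    proof (rule eventually_at_rightI[of 0 "Zf k a"])
      fix z assume "z \<in> {0<..<Zf k a}"
      hence "Tf k z < Tf k (Zf k a)" using T_less_iff[OF k _ Za] by auto
      thus "Tf k z < a" using T_Z[OF k a] by simp
    qed (rule Za)
  qed
qed

lemma T_cont: assumes k: "k \<ge> 1" and z: "z > 0" shows "isCont (Tf k) z"
proof -
  define t where "t = Tf k z"
  have t: "t > 0" "Zf k t = z" using T_prop[OF k z] by (auto simp: t_def)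
  have pos: "u > 0" if "\<bar>u - t\<bar> \<le> t/2" for u
    using abs_le_D2[OF that] t(1) by linarith
  have pos2: "u \<ge> 0" if "\<bar>u - t\<bar> * 2 \<le> t" for u
    using pos[of u] that by simp
  have cc: "isCont (Zf k) u" if "\<bar>u - t\<bar> * 2 \<le> t" for u
    using Z_cont[OF k pos2[OF that]] .
  have "isCont (Tf k) (Zf k t)"
    by (rule isCont_inverse_function[where d = "t/2" and f = "Zf k" and x = t])
       (use t pos T_Z[OF k] cc in \<open>auto simp del: divide_le_eq_numeral1\<close>)
  thus ?thesis using t by simp
qed

lemma T_deriv: assumes k: "k \<ge> 1" and z: "z > 0"
  shows "(Tf k has_field_derivative inverse (Zd k (Tf k z))) (at z)"
proof (rule DERIV_inverse_function[where f = "Zf k" and a = 0 and b = "z+1"])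
  show "(Zf k has_field_derivative Zd k (Tf k z)) (at (Tf k z))"
    using Z_deriv[OF k] T_prop[OF k z] by simp
  show "Zd k (Tf k z) \<noteq> 0" using Zd_pos[OF k] T_prop[OF k z] by (simp add: less_imp_neq[symmetric])
  show "0 < z" "z < z + 1" using z by auto
  show "\<And>y. 0 < y \<Longrightarrow> y < z + 1 \<Longrightarrow> Zf k (Tf k y) = y" using T_prop[OF k] by auto
  show "isCont (Tf k) z" using T_cont[OF k z] .
qed


definition Xf :: "nat \<Rightarrow> real \<Rightarrow> real" where "Xf k t = Af k t / (1 + t * Af k t)"
definition Yf :: "nat \<Rightarrow> real \<Rightarrow> real" where "Yf k t = t * Af k t / (1 + t * Af k t)"
definition sig :: "nat \<Rightarrow> real \<Rightarrow> real" where
  "sig k x = (if 0 < x \<and> x < 1 then Yf k (Tf k (- ln x)) else if x = 0 then 1 else 0)"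

lemma X_exp: assumes k: "k \<ge> 1" and t: "t > 0" shows "Xf k t = exp (- Zf k t)"
proof -
  have A: "Af k t > 0" using A_pos k t by auto
  have q: "t + 1 / Af k t > 0" using A t by (simp add: add_pos_pos)
  have "exp (- Zf k t) = 1 / (t + 1 / Af k t)" using Z_alt2[OF k, of t] t q by (simp add: exp_minus inverse_eq_divide)
  also have "\<dots> = Xf k t" unfolding Xf_def using A by (simp add: field_simps)
  finally show ?thesis by simp
qed

lemma X_pos: "k \<ge> 1 \<Longrightarrow> t > 0 \<Longrightarrow> Xf k t > 0"
  using X_exp by simp

lemma Y_eq: "Yf k t = t * Xf k t"
  by (simp add: Xf_def Yf_def)

lemma X_strict_anti: assumes k: "k \<ge> 1" and st: "0 < s" "s < t" shows "Xf k t < Xf k s"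
  using Z_strict_mono[OF k st] X_exp[OF k] st by simp

lemma X_T: assumes k: "k \<ge> 1" and x: "0 < x" "x < 1" shows "Xf k (Tf k (- ln x)) = x"
proof -
  have z: "- ln x > 0" using x by simp
  show ?thesis using T_prop[OF k z] X_exp[OF k, of "Tf k (- ln x)"] x by simp
qed

lemma Y_range: assumes k: "k \<ge> 1" and t: "t > 0" shows "0 < Yf k t \<and> Yf k t < 1"
proof -
  have A: "Af k t > 0" using A_pos k t by auto
  have "t * Af k t > 0" using A t by simp
  thus ?thesis unfolding Yf_def by (simp add: field_simps)
qed

lemma Y_strict_mono: assumes k: "k \<ge> 1" and st: "0 < s" "s < t" shows "Yf k s < Yf k t"
proof -
  have As: "Af k s > 0" using A_pos k st by auto
  have "Af k s \<le> Af k t" using A_mono st by auto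
  hence "t * Af k s \<le> t * Af k t" using st by (intro mult_left_mono) auto
  moreover have "s * Af k s < t * Af k s" using As st by (intro mult_strict_right_mono) auto
  ultimately have u: "s * Af k s < t * Af k t" by linarith
  have "s * Af k s > 0" using As st by simp
  thus ?thesis unfolding Yf_def using u by (simp add: field_simps)
qed

lemma h_XY: assumes k: "k \<ge> 1" and t: "t > 0"
  shows "Yf k t ^ k - Yf k t ^ (k+1) = Xf k t ^ k - Xf k t ^ (k+1)"
proof -
  have A: "Af k t > 0" using A_pos k t by auto
  define D where "D = 1 + t * Af k t"
  have D: "D > 0" using A t by (simp add: D_def add_pos_pos)
  have X1: "1 - Xf k t = t^k / D" unfolding Xf_def D_def[symmetric] using D A_id[of k t]
    by (simp add: field_simps D_def)
  have Y1: "1 - Yf k t = 1 / D" unfolding Yf_def D_def[symmetric] using D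
    by (simp add: field_simps D_def)
  have "Yf k t ^ k - Yf k t ^ (k+1) = Yf k t ^ k * (1 - Yf k t)" by (simp add: algebra_simps)
  also have "\<dots> = t^k * Xf k t ^ k / D" unfolding Y1 by (simp add: Y_eq power_mult_distrib)
  also have "\<dots> = Xf k t ^ k * (1 - Xf k t)" unfolding X1 by simp
  also have "\<dots> = Xf k t ^ k - Xf k t ^ (k+1)" by (simp add: algebra_simps)
  finally show ?thesis .
qed

lemma sig_props: assumes k: "k \<ge> 1" and x: "0 < x" "x < 1"
  shows "0 < sig k x \<and> sig k x < 1 \<and> sig k x ^ k - sig k x ^ (k+1) = x ^ k - x ^ (k+1)"
proof -
  define t where "t = Tf k (- ln x)"
  have t: "t > 0" using T_prop[OF k, of "- ln x"] x by (simp add: t_def)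
  have s: "sig k x = Yf k t" using x by (simp add: sig_def t_def)
  have xx: "Xf k t = x" using X_T[OF k x] by (simp add: t_def)
  show ?thesis unfolding s using Y_range[OF k t] h_XY[OF k t] xx by simp
qed

lemma sig_anti: assumes k: "k \<ge> 1" and x: "0 < x" "x < y" "y < 1" shows "sig k y < sig k x"
proof -
  have "- ln y < - ln x" using x by simp
  hence "Tf k (- ln y) < Tf k (- ln x)" using T_less_iff[OF k] x by simp
  moreover have "Tf k (- ln y) > 0" using T_prop[OF k, of "- ln y"] x by simp
  ultimately show ?thesis using Y_strict_mono[OF k] x by (simp add: sig_def)
qed

definition cc :: "nat \<Rightarrow> real" where "cc k = Xf k 1"

lemma sig_vs_id: assumes k: "k \<ge> 1" and x: "0 < x" "x < 1"
  shows "(x < cc k \<longrightarrow> x < sig k x) \<and> (cc k < x \<longrightarrow> sig k x < x)"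
proof -
  define t where "t = Tf k (- ln x)"
  have t: "t > 0" using T_prop[OF k, of "- ln x"] x by (simp add: t_def)
  have s: "sig k x = t * x" using x X_T[OF k x] by (simp add: sig_def t_def Y_eq)
  have xx: "Xf k t = x" using X_T[OF k x] by (simp add: t_def)
  have 1: "x < cc k \<Longrightarrow> t > 1"
    using X_strict_anti[OF k, of t 1] t xx unfolding cc_def by (cases t "1::real" rule: linorder_cases) auto
  have 2: "cc k < x \<Longrightarrow> t < 1"
    using X_strict_anti[OF k, of 1 t] t xx unfolding cc_def by (cases t "1::real" rule: linorder_cases) auto
  show ?thesis using 1 2 x unfolding s by auto
qed

lemma cc_range: "k \<ge> 1 \<Longrightarrow> 0 < cc k \<and> cc k < 1"
  using A_pos[of k 1] unfolding cc_def Xf_def by (simp add: field_simps)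

lemma sol: assumes k: "k \<ge> 1" and x: "0 < x" "x < 1" and y: "0 < y" "y < 1"
  and h: "y ^ k - y ^ (k+1) = x ^ k - x ^ (k+1)" and ne: "y \<noteq> x"
  shows "y = sig k x"
proof -
  define t where "t = y / x"
  define A where "A = Af k t"
  have t: "t > 0" "y = t * x" using x y by (auto simp: t_def)
  have t1: "t \<noteq> 1" using ne t by auto
  have "x^k * (1 - x) = (t^k * x^k) * (1 - t * x)"
    using h unfolding t(2) by (simp add: power_mult_distrib algebra_simps)
  hence eq: "1 - x = t^k * (1 - t * x)" using x by simp
  have tk: "t^k = 1 + t * A - A" using A_id[of k t] by (simp add: A_def)
  have "(t - 1) * (x * (1 + t * A) - A) = (1 - x) - (1 + t * A - A) * (1 - t * x)"
    by (simp add: algebra_simps)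
  also have "\<dots> = 0" using eq tk by simp
  finally have "x * (1 + t * A) = A" using t1 by simp
  moreover have "1 + t * A > 0" using A_pos[OF k, of t] t by (simp add: A_def add_pos_pos)
  ultimately have xX: "x = Xf k t" unfolding Xf_def A_def[symmetric] by (simp add: field_simps)
  have "- ln x = Zf k t" using X_exp[OF k t(1)] xX by simp
  hence "Tf k (- ln x) = t" using T_Z[OF k t(1)] by simp
  hence "sig k x = Yf k t" using x by (simp add: sig_def)
  thus ?thesis using Y_eq xX t by simp
qed


lemma h_factor: "(y::real) ^ k - y ^ (k+1) = y^k * (1 - y)"
  by (simp add: algebra_simps)

lemma h_pos: "0 < (y::real) \<Longrightarrow> y < 1 \<Longrightarrow> y ^ k - y ^ (k+1) > 0"
  unfolding h_factor by simp

lemma h_zero: "(y::real) ^ k - y ^ (k+1) = 0 \<Longrightarrow> y = 0 \<or> y = 1"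
  unfolding h_factor by auto

lemma sig_cc: assumes k: "k \<ge> 1" shows "sig k (cc k) = cc k"
proof -
  have c: "0 < cc k" "cc k < 1" using cc_range[OF k] by auto
  have "- ln (cc k) = Zf k 1" using X_exp[OF k, of 1] unfolding cc_def by simp
  hence "Tf k (- ln (cc k)) = 1" using T_Z[OF k, of 1] by simp
  thus ?thesis using c by (simp add: sig_def Y_eq cc_def)
qed

lemma sig_range: "k \<ge> 1 \<Longrightarrow> 0 \<le> sig k x \<and> sig k x \<le> 1"
  using sig_props[of k x] by (auto simp: sig_def split: if_splits)

lemma f_eq: assumes k: "k \<ge> 1" shows "f_fun k = sig k"
  unfolding f_fun_def
proof (rule the_equality)
  show "(\<forall>x\<in>{0..1}. sig k x \<in> {0..1} \<and> sig k x ^ k - sig k x ^ (k + 1) = x ^ k - x ^ (k + 1)) \<and>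
    antimono_on {0..1} (sig k) \<and> (\<forall>x. x \<notin> {0..1} \<longrightarrow> sig k x = 0)"
  proof (intro conjI ballI allI impI)
    fix x :: real assume x: "x \<in> {0..1}"
    show "sig k x \<in> {0..1}" using sig_range[OF k] by auto
    show "sig k x ^ k - sig k x ^ (k + 1) = x ^ k - x ^ (k + 1)"
    proof (cases "x = 0 \<or> x = 1")
      case True thus ?thesis using k by (auto simp: sig_def power_0_left)
    next
      case False thus ?thesis using sig_props[OF k, of x] x by auto
    qed
  next
    show "antimono_on {0..1} (sig k)"
    proof (rule monotone_onI)
      fix x y :: real assume xy: "x \<in> {0..1}" "y \<in> {0..1}" "x \<le> y"
      show "sig k y \<le> sig k x"
      proof (cases "x = y \<or> x = 0 \<or> y = 1")
        case True thus ?thesis using sig_range[OF k, of x] sig_range[OF k, of y]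
          by (auto simp: sig_def)
      next
        case False thus ?thesis using sig_anti[OF k, of x y] xy by force
      qed
    qed
  next
    fix x :: real assume "x \<notin> {0..1}" thus "sig k x = 0" by (auto simp: sig_def)
  qed
next
  fix F :: "real \<Rightarrow> real" assume P: "(\<forall>x\<in>{0..1}. F x \<in> {0..1} \<and> F x ^ k - F x ^ (k + 1) = x ^ k - x ^ (k + 1)) \<and>
    antimono_on {0..1} F \<and> (\<forall>x. x \<notin> {0..1} \<longrightarrow> F x = 0)"
  have F01: "0 \<le> F x \<and> F x \<le> 1" if "x \<in> {0..1}" for x using P that by auto
  have Fh: "F x ^ k - F x ^ (k + 1) = x ^ k - x ^ (k + 1)" if "x \<in> {0..1}" for x using P that by auto
  have Fa: "F y \<le> F x" if "x \<in> {0..1}" "y \<in> {0..1}" "x \<le> y" for x y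
    using P that monotone_onD[of "{0..1}" "(\<le>)" "\<lambda>x y. y \<le> x" F x y] by auto
  have c: "0 < cc k" "cc k < 1" using cc_range[OF k] by auto
  have cand: "F x = x \<or> F x = sig k x" if x: "0 < (x::real)" "x < 1" for x
  proof -
    have "F x ^ k - F x ^ (k + 1) > 0" using Fh[of x] h_pos[OF x] x by simp
    hence "F x \<noteq> 0" "F x \<noteq> 1" using k by (auto simp: power_0_left)
    hence "0 < F x" "F x < 1" using F01[of x] x by auto
    thus ?thesis using sol[OF k x _ _ Fh[of x]] x by auto
  qed
  have Fc: "0 < F (cc k)"
  proof -
    have "F (cc k) ^ k - F (cc k) ^ (k + 1) > 0" using Fh[of "cc k"] h_pos[OF c] c by simp
    hence "F (cc k) \<noteq> 0" using k by (auto simp: power_0_left)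
    thus ?thesis using F01[of "cc k"] c by auto
  qed
  have Fc1: "F (cc k) < 1"
  proof -
    have "F (cc k) ^ k - F (cc k) ^ (k + 1) > 0" using Fh[of "cc k"] h_pos[OF c] c by simp
    hence "F (cc k) \<noteq> 1" by auto
    thus ?thesis using F01[of "cc k"] c by auto
  qed
  show "F = sig k"
  proof
    fix x :: real
    show "F x = sig k x"
    proof (cases "x \<in> {0..1}")
      case False thus ?thesis using P by (auto simp: sig_def)
    next
      case x: True
      consider "x = 0" | "x = 1" | "0 < x" "x < 1" using x by fastforce
      thus ?thesis
      proof cases
        case 1
        have "F 0 = 0 \<or> F 0 = 1" using Fh[of 0] k by (intro h_zero) (auto simp: power_0_left)
        moreover have "F (cc k) \<le> F 0" using Fa[of 0 "cc k"] c by auto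
        ultimately show ?thesis using Fc 1 by (auto simp: sig_def)
      next
        case 2
        have "F 1 = 0 \<or> F 1 = 1" using Fh[of 1] k by (intro h_zero) (auto simp: power_0_left)
        moreover have "F 1 \<le> F (cc k)" using Fa[of "cc k" 1] c by auto
        ultimately show ?thesis using Fc1 2 by (auto simp: sig_def)
      next
        case 3
        note x01 = 3
        show ?thesis
        proof (rule ccontr)
          assume ne: "F x \<noteq> sig k x"
          hence Fx: "F x = x" using cand[OF 3] by auto
          consider "x < cc k" | "x = cc k" | "cc k < x" by fastforce
          thus False
          proof cases
            case 1
            define u where "u = (x + cc k) / 2"
            have u: "x < u" "u < cc k" using 1 by (auto simp: u_def)
            have "F u \<le> F x" using Fa[of x u] u 3 c by auto
            hence "F u < u" using Fx u by simp
            moreover have "sig k u > u" using sig_vs_id[OF k, of u] u 3 c by auto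
            ultimately show False using cand[of u] u 3 c by auto
          next
            case 2 thus False using ne Fx sig_cc[OF k] by simp
          next
            case 3
            define u where "u = (x + cc k) / 2"
            have u: "u < x" "cc k < u" using 3 by (auto simp: u_def)
            have "F x \<le> F u" using Fa[of u x] u x01 c by auto
            hence "F u > u" using Fx u by simp
            moreover have "sig k u < u" using sig_vs_id[OF k, of u] u x01 c by auto
            ultimately show False using cand[of u] u x01 c by auto
          qed
        qed
      qed
    qed
  qed
qed


lemma ra1: "((\<lambda>v::real. ln (1 + 1 / v) * v) \<longlongrightarrow> 1) at_top" by real_asymp
lemma ra2: "((\<lambda>v::real. v / (1 + v)) \<longlongrightarrow> 1) at_top" by real_asymp
lemma ra3: "((\<lambda>w::real. ln (1 + w) / w) \<longlongrightarrow> 1) (at_right 0)" by real_asymp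
lemma ra4: "((\<lambda>t::real. 1 / ln t) \<longlongrightarrow> 0) (at_right 0)" by real_asymp
lemma ra5: "((\<lambda>t::real. 1 / t) \<longlongrightarrow> 0) at_top" by real_asymp

lemma onep_div: "(v::real) > 0 \<Longrightarrow> (1 + v) / v = 1 + 1 / v"
  by (simp add: field_simps)

lemma g_eq: assumes k: "k \<ge> 1" and z: "z > 0"
  shows "g_fun k z = z - ln (Tf k z)"
    and "g_fun k z = ln (1 + 1 / (Tf k z * Af k (Tf k z)))"
proof -
  define t where "t = Tf k z"
  have t: "t > 0" "Zf k t = z" using T_prop[OF k z] by (auto simp: t_def)
  have e: "0 < exp (- z)" "exp (- z) < 1" using z by auto
  have f: "f_fun k (exp (- z)) = Yf k t" using e by (simp add: f_eq[OF k] sig_def t_def)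
  have A: "Af k t > 0" using A_pos k t by auto
  have u: "t * Af k t > 0" using A t by simp
  have g: "g_fun k z = - ln (Yf k t)" by (simp add: g_fun_def f)
  have "- ln (Yf k t) = ln (1 / Yf k t)" using Y_range[OF k t(1)] by (simp add: ln_div)
  also have "1 / Yf k t = 1 + 1 / (t * Af k t)" unfolding Yf_def using u by (simp add: onep_div)
  finally have g1: "g_fun k z = ln (1 + 1 / (t * Af k t))" using g by simp
  thus "g_fun k z = ln (1 + 1 / (Tf k z * Af k (Tf k z)))" by (simp add: t_def)
  have "z - ln t = ln (t + 1 / Af k t) - ln t" using Z_alt2[OF k, of t] t by simp
  also have "\<dots> = ln ((t + 1 / Af k t) / t)"
  proof -
    have q: "t + 1 / Af k t > 0" using A t by (simp add: add_pos_pos)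
    show ?thesis using q t by (simp add: ln_div)
  qed
  also have "(t + 1 / Af k t) / t = 1 + 1 / (t * Af k t)" using t A by (simp add: field_simps)
  finally show "g_fun k z = z - ln (Tf k z)" using g1 by (simp add: t_def)
qed

lemma exp_T: assumes k: "k \<ge> 1" and z: "z > 0" shows "exp (- real k * z) = Xf k (Tf k z) ^ k"
proof -
  have "Xf k (Tf k z) = exp (- z)" using X_exp[OF k] T_prop[OF k z] by simp
  thus ?thesis by (simp add: exp_of_nat_mult[symmetric])
qed

lemma aux_a: "(u::real) > 0 \<Longrightarrow> t > 0 \<Longrightarrow> X > 0 \<Longrightarrow> (L*u)*(t^k/u)/(t*X)^k = L/X^k"
  by (simp add: power_mult_distrib field_simps)

lemma part_a: assumes k: "k \<ge> 1" shows "g_fun k \<sim>[at_top] (\<lambda>z. exp (- real k * z))"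
proof -
  define u where "u t = t * Af k t" for t
  have ev: "eventually (\<lambda>t::real. t > 0) at_top" by simp
  have ulim: "filterlim u at_top at_top"
  proof (rule filterlim_at_top_mono[OF filterlim_ident])
    show "\<forall>\<^sub>F t in at_top. t \<le> u t" using ev
    proof eventually_elim
      case (elim t) thus ?case using A_ge1[OF k, of t] unfolding u_def
        by (metis less_imp_le mult_le_cancel_left1 not_le)
    qed
  qed
  have L1: "((\<lambda>t. ln (1 + 1 / u t) * u t) \<longlongrightarrow> 1) at_top" 
    by (rule filterlim_compose[OF ra1 ulim])
  have L2: "((\<lambda>t. u t / (1 + u t)) \<longlongrightarrow> 1) at_top" by (rule filterlim_compose[OF ra2 ulim])
  have L3a: "((\<lambda>t. 1 / u t) \<longlongrightarrow> 0) at_top" by (rule filterlim_compose[OF ra5 ulim])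
  have L3: "((\<lambda>t. 1 / u t + 1 - 1 / t) \<longlongrightarrow> 0 + 1 - 0) at_top"
    by (intro tendsto_intros L3a ra5)
  have lim: "((\<lambda>t. (ln (1 + 1 / u t) * u t) * (1 / u t + 1 - 1 / t) / (u t / (1 + u t)) ^ k) \<longlongrightarrow> 1 * (0 + 1 - 0) / 1 ^ k) at_top"
    by (intro tendsto_intros L1 L2 L3) auto
  have "((\<lambda>t. ln (1 + 1 / u t) / Xf k t ^ k) \<longlongrightarrow> 1) at_top"
  proof (rule Lim_transform_eventually[OF lim[simplified]])
    show "\<forall>\<^sub>F t in at_top. (ln (1 + 1 / u t) * u t) * (1 / u t + 1 - 1 / t) / (u t / (1 + u t)) ^ k =
        ln (1 + 1 / u t) / Xf k t ^ k" using ev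
    proof eventually_elim
      case (elim t)
      have A: "Af k t > 0" using A_pos k elim by auto
      have up: "u t > 0" using A elim by (simp add: u_def)
      have tk: "t^k = 1 + u t - Af k t" using A_id[of k t] by (simp add: u_def)
      have "1 / u t + 1 - 1 / t = t^k / u t" unfolding tk using up elim A by (simp add: field_simps u_def)
      moreover have "u t / (1 + u t) = t * Xf k t" by (simp add: Xf_def u_def)
      moreover have "Xf k t > 0" using X_pos[OF k elim] .
      ultimately show ?case using up elim aux_a[of "u t" t "Xf k t" "ln (1 + 1 / u t)" k] by simp
    qed
  qed
  hence "(\<lambda>t. ln (1 + 1 / u t)) \<sim>[at_top] (\<lambda>t. Xf k t ^ k)" by (rule asymp_equivI')
  from asymp_equiv_compose'[OF this T_lim_top[OF k]]
  have main: "(\<lambda>z. ln (1 + 1 / u (Tf k z))) \<sim>[at_top] (\<lambda>z. Xf k (Tf k z) ^ k)" .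
  have e1: "eventually (\<lambda>z. ln (1 + 1 / u (Tf k z)) = g_fun k z) at_top"
    using eventually_gt_at_top[of 0] by eventually_elim (simp add: g_eq(2)[OF k] u_def)
  have e2: "eventually (\<lambda>z. Xf k (Tf k z) ^ k = exp (- real k * z)) at_top"
    using eventually_gt_at_top[of 0] by eventually_elim (rule exp_T[OF k, symmetric])
  show ?thesis by (rule iffD1[OF asymp_equiv_cong[OF e1 e2] main])
qed


lemma A0: "k \<ge> 1 \<Longrightarrow> Af k 0 = 1"
  by (simp add: Af_def power_0_left)

lemma Q1: assumes k: "k \<ge> 1" shows "((\<lambda>t. Zf k t / t^k) \<longlongrightarrow> 1) (at_right 0)"
proof -
  define W where "W t = t^k / Af k t" for t
  have Wc: "isCont W 0" unfolding W_def using A0[OF k]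
    by (intro continuous_intros A_cont) auto
  have W0: "W 0 = 0" using k by (simp add: W_def power_0_left)
  have "(W \<longlongrightarrow> 0) (at_right 0)"
    using Wc W0 by (metis continuous_at_split continuous_within)
  moreover have "\<forall>\<^sub>F t in at_right 0. W t > 0"
    by (rule eventually_at_rightI[of 0 1]) (use A_pos[OF k] in \<open>auto simp: W_def\<close>)
  ultimately have Wl: "filterlim W (at_right 0) (at_right 0)" by (rule tendsto_imp_filterlim_at_right)
  have l1: "((\<lambda>t. ln (1 + W t) / W t) \<longlongrightarrow> 1) (at_right 0)" by (rule filterlim_compose[OF ra3 Wl])
  have "(Af k \<longlongrightarrow> Af k 0) (at_right 0)" using A_cont[where k=k and t=0] by (metis continuous_at_split continuous_within)
  hence l2: "((\<lambda>t. 1 / Af k t) \<longlongrightarrow> 1) (at_right 0)" using A0[OF k] by (auto intro!: tendsto_eq_intros)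
  have "((\<lambda>t. ln (1 + W t) / W t * (1 / Af k t)) \<longlongrightarrow> 1 * 1) (at_right 0)" by (intro tendsto_intros l1 l2)
  moreover have "\<forall>\<^sub>F t in at_right 0. ln (1 + W t) / W t * (1 / Af k t) = Zf k t / t^k"
  proof (rule eventually_at_rightI[of 0 1])
    fix t :: real assume t: "t \<in> {0<..<1}"
    have A: "Af k t > 0" using A_pos[OF k, of t] t by auto
    show "ln (1 + W t) / W t * (1 / Af k t) = Zf k t / t^k"
      using Z_alt1[OF k, of t] t A by (simp add: W_def field_simps)
  qed simp
  ultimately show ?thesis by (simp add: tendsto_cong)
qed

lemma aux_b: "(k::real) > 0 \<Longrightarrow> L < 0 \<Longrightarrow> lz < 0 \<Longrightarrow>
   (Z - L) / ((1/k) * (-lz)) = (1 - Z*(1/L))/(1 + (lz - k*L)*(1/L)/k)"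
  by (simp add: field_simps)

lemma part_b_t: assumes k: "k \<ge> 1"
  shows "(\<lambda>t. Zf k t - ln t) \<sim>[at_right 0] (\<lambda>t. (1 / real k) * ln (1 / Zf k t))"
proof (rule asymp_equivI')
  have e: "((\<lambda>t. ln (Zf k t / t^k)) \<longlongrightarrow> ln 1) (at_right 0)" by (intro Q1[OF k] tendsto_intros) auto
  have lim: "((\<lambda>t. (1 - Zf k t * (1 / ln t)) / (1 + ln (Zf k t / t^k) * (1 / ln t) / real k)) \<longlongrightarrow>
        (1 - 0 * 0) / (1 + ln 1 * 0 / real k)) (at_right 0)"
    by (intro e Z_lim0[OF k] ra4 tendsto_intros) (use k in auto)
  have ev1: "\<forall>\<^sub>F t in at_right 0. Zf k t < 1" using Z_lim0[OF k] by (rule order_tendstoD) simp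
  have ev2: "\<forall>\<^sub>F t::real in at_right 0. 0 < t \<and> t < 1" by (rule eventually_at_rightI[of 0 1]) auto
  have lim': "(1 - 0 * 0) / (1 + ln 1 * 0 / real k) = (1::real)" by simp
  show "((\<lambda>t. (Zf k t - ln t) / ((1 / real k) * ln (1 / Zf k t))) \<longlongrightarrow> 1) (at_right 0)"
  proof (rule Lim_transform_eventually[OF lim[unfolded lim']])
    show "\<forall>\<^sub>F t in at_right 0. (1 - Zf k t * (1 / ln t)) / (1 + ln (Zf k t / t^k) * (1 / ln t) / real k) =
        (Zf k t - ln t) / ((1 / real k) * ln (1 / Zf k t))"
      using ev1 ev2
    proof eventually_elim
      case (elim t)
      have Zp: "Zf k t > 0" using Z_pos[OF k] elim by auto
      have L: "ln t < 0" using elim by simp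
      have lz: "ln (Zf k t) < 0" using elim Zp by simp
      have eps: "ln (Zf k t / t^k) = ln (Zf k t) - real k * ln t" using Zp elim by (simp add: ln_div ln_realpow)
      have l1: "ln (1 / Zf k t) = - ln (Zf k t)" using Zp by (simp add: ln_div)
      show ?case unfolding eps l1 using aux_b[of "real k" "ln t" "ln (Zf k t)" "Zf k t"] k L lz by simp
    qed
  qed
qed

lemma aux_c1: "(p::real) > 0 \<Longrightarrow> Z > 0 \<Longrightarrow> k > 0 \<Longrightarrow> (1 - 1/p)/(-1/(k*Z)) = -k*Z + k*Z/p"
  by (simp add: field_simps)

lemma aux_c2: "(tk::real) > 0 \<Longrightarrow> D > 0 \<Longrightarrow> A > 0 \<Longrightarrow> B > 0 \<Longrightarrow> k * Z / (tk * D / (A * B)) = k * (Z / tk) * (A * B) / D"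
  by (simp add: field_simps)

lemma part_c_t: assumes k: "k \<ge> 1"
  shows "(\<lambda>t. 1 - 1 / (t * Zd k t)) \<sim>[at_right 0] (\<lambda>t. - 1 / (real k * Zf k t))"
proof (rule asymp_equivI')
  have cA: "(Af k \<longlongrightarrow> 1) (at_right 0)" using A_cont[where k=k and t=0] A0[OF k] by (metis continuous_at_split continuous_within)
  have cD: "(Ad k \<longlongrightarrow> Ad k 0) (at_right 0)" using Ad_cont[where k=k and t=0] by (metis continuous_at_split continuous_within)
  have ct: "((\<lambda>t::real. t) \<longlongrightarrow> 0) (at_right 0)" by (rule tendsto_ident_at)
  have lim: "((\<lambda>t. - real k * Zf k t + real k * (Zf k t / t^k) * (Af k t * (Af k t + t^k)) / (real k * Af k t - t * Ad k t)) \<longlongrightarrow>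
     - real k * 0 + real k * 1 * (1 * (1 + 0^k)) / (real k * 1 - 0 * Ad k 0)) (at_right 0)"
    by (intro Z_lim0[OF k] Q1[OF k] cA cD ct tendsto_intros) (use k in auto)
  have lim': "- real k * 0 + real k * 1 * (1 * (1 + 0^k)) / (real k * 1 - 0 * Ad k 0) = (1::real)"
    using k by (simp add: power_0_left)
  show "((\<lambda>t. (1 - 1 / (t * Zd k t)) / (- 1 / (real k * Zf k t))) \<longlongrightarrow> 1) (at_right 0)"
  proof (rule Lim_transform_eventually[OF lim[unfolded lim']])
    show "\<forall>\<^sub>F t in at_right 0. - real k * Zf k t + real k * (Zf k t / t^k) * (Af k t * (Af k t + t^k)) / (real k * Af k t - t * Ad k t) =
       (1 - 1 / (t * Zd k t)) / (- 1 / (real k * Zf k t))"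
    proof (rule eventually_at_rightI[of 0 1])
      fix t :: real assume t: "t \<in> {0<..<1}"
      hence t0: "t > 0" by simp
      have A: "Af k t > 0" using A_pos[OF k, of t] t by auto
      have B: "Af k t + t^k > 0" using A t by (simp add: add_pos_pos)
      have D: "real k * Af k t - t * Ad k t > 0" using kA_pos[OF k t0] .
      have Zp: "Zf k t > 0" using Z_pos[OF k t0] .
      have p: "t * Zd k t > 0" using Zd_pos[OF k t0] t0 by simp
      have kk: "real k > 0" using k by simp
      show "- real k * Zf k t + real k * (Zf k t / t^k) * (Af k t * (Af k t + t^k)) / (real k * Af k t - t * Ad k t) =
       (1 - 1 / (t * Zd k t)) / (- 1 / (real k * Zf k t))"
        unfolding aux_c1[OF p Zp kk] tZd[OF k t0] aux_c2[OF _ D A B] using t0 D by (simp add: field_simps)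
    qed simp
  qed
qed


lemma g_deriv: assumes k: "k \<ge> 1" and z: "z > 0"
  shows "(g_fun k has_field_derivative 1 - 1 / (Tf k z * Zd k (Tf k z))) (at z)"
proof -
  have Tp: "Tf k z > 0" using T_prop[OF k z] by simp
  have Dp: "Zd k (Tf k z) > 0" using Zd_pos[OF k Tp] .
  have "((\<lambda>z. z - ln (Tf k z)) has_field_derivative 1 - inverse (Zd k (Tf k z)) / Tf k z) (at z)"
    using Tp by (auto intro!: derivative_eq_intros T_deriv[OF k z] simp: field_simps)
  moreover have "1 - inverse (Zd k (Tf k z)) / Tf k z = 1 - 1 / (Tf k z * Zd k (Tf k z))"
    by (simp add: field_simps)
  ultimately have d: "((\<lambda>z. z - ln (Tf k z)) has_field_derivative 1 - 1 / (Tf k z * Zd k (Tf k z))) (at z)" by simp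
  show ?thesis
    by (rule has_field_derivative_transform_within_open[OF d, of "{0<..}"]) (use z g_eq(1)[OF k] in auto)
qed

theorem mainTheorem10:
  fixes k :: nat
  assumes "k \<ge> 1"
  shows "(g_fun k \<sim>[at_top] (\<lambda>z. exp (- real k * z)))
       \<and> (g_fun k \<sim>[at_right 0] (\<lambda>z. (1 / real k) * ln (1 / z)))
       \<and> (\<forall>z>0. g_fun k differentiable (at z))
       \<and> ((\<lambda>z. deriv (g_fun k) z) \<sim>[at_right 0] (\<lambda>z. - 1 / (real k * z)))"
proof (intro conjI allI impI)
  note k = assms
  have evp: "\<forall>\<^sub>F z::real in at_right 0. z > 0" by (rule eventually_at_rightI[of 0 1]) auto
  show "g_fun k \<sim>[at_top] (\<lambda>z. exp (- real k * z))" by (rule part_a[OF k])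
  show "g_fun k \<sim>[at_right 0] (\<lambda>z. (1 / real k) * ln (1 / z))"
  proof -
    have main: "(\<lambda>z. Zf k (Tf k z) - ln (Tf k z)) \<sim>[at_right 0] (\<lambda>z. (1 / real k) * ln (1 / Zf k (Tf k z)))"
      by (rule asymp_equiv_compose'[OF part_b_t[OF k] T_lim0[OF k]])
    have e1: "\<forall>\<^sub>F z in at_right 0. Zf k (Tf k z) - ln (Tf k z) = g_fun k z"
      using evp by eventually_elim (simp add: T_prop[OF k] g_eq(1)[OF k])
    have e2: "\<forall>\<^sub>F z in at_right 0. (1 / real k) * ln (1 / Zf k (Tf k z)) = (1 / real k) * ln (1 / z)"
      using evp by eventually_elim (simp add: T_prop[OF k])
    show ?thesis by (rule iffD1[OF asymp_equiv_cong[OF e1 e2] main])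
  qed
  fix z :: real assume "z > 0"
  thus "g_fun k differentiable (at z)"
    using g_deriv[OF k] by (meson differentiableI has_field_derivative_imp_has_derivative)
next
  note k = assms
  have evp: "\<forall>\<^sub>F z::real in at_right 0. z > 0" by (rule eventually_at_rightI[of 0 1]) auto
  have main: "(\<lambda>z. 1 - 1 / (Tf k z * Zd k (Tf k z))) \<sim>[at_right 0] (\<lambda>z. - 1 / (real k * Zf k (Tf k z)))"
    by (rule asymp_equiv_compose'[OF part_c_t[OF k] T_lim0[OF k]])
  have e1: "\<forall>\<^sub>F z in at_right 0. 1 - 1 / (Tf k z * Zd k (Tf k z)) = deriv (g_fun k) z"
    using evp by eventually_elim (use DERIV_imp_deriv[OF g_deriv[OF k]] in simp)
  have e2: "\<forall>\<^sub>F z in at_right 0. - 1 / (real k * Zf k (Tf k z)) = - 1 / (real k * z)"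
    using evp by eventually_elim (simp add: T_prop[OF k])
  show "(\<lambda>z. deriv (g_fun k) z) \<sim>[at_right 0] (\<lambda>z. - 1 / (real k * z))"
    by (rule iffD1[OF asymp_equiv_cong[OF e1 e2] main])
qed

end
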